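(* Let $\phi$ be a formula in $\mathsf F(\mathrm{LTL}[\mathsf O])$ and $\psi$ a formula in $\mathrm{LTL}[\mathsf X,\mathsf{wX},\mathsf F,\mathsf G]$. If $\phi\equiv_\omega\psi$, then $\psi\equiv_\omega\mathsf F\psi$.
   Context: Let $AP$ be a finite set of atomic propositions and $\Sigma=2^{AP}$. Formulae (negation normal form) are built from literals $p,\neg p$ ($p\in AP$) with $\land,\lor$ and temporal operators. Semantics on infinite traces $\sigma\in\Sigma^\omega$ at positions $i\in\mathbb N$: literals/Booleans as usual; $\mathsf X\phi$ and $\mathsf{wX}\phi$: $\phi$ holds at $i+1$; $\mathsf F\phi$/$\mathsf G\phi$: $\phi$ at some/every $j\ge i$; $\mathsf O\phi$: $\phi$ at some $0\le j\le i$. $\mathcal L^\omega(\phi)=\{\sigma\in\Sigma^\omega:\sigma,0\models\phi\}$; $\phi\equiv_\omega\psi$ iff $\mathcal L^\omega(\phi)=\mathcal L^\omega(\psi)$. $\mathrm{LTL}[S]$: formulae whose temporal operators lie in $S$; $\mathsf F(\mathrm{LTL}[\mathsf O])$: formulae $\mathsf F(\alpha)$ with $\alpha\in\mathrm{LTL}[\mathsf O]$. *)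

theory Defs
  imports Main
begin

text \<open>LTL formulae in negation normal form over atomic propositions of type 'ap.
  Traces are infinite words w :: nat \<Rightarrow> 'ap set (letters in 2^AP).\<close>

datatype 'ap ltl =
    Prop 'ap
  | NProp 'ap
  | And "'ap ltl" "'ap ltl"
  | Or "'ap ltl" "'ap ltl"
  | Next "'ap ltl"
  | WNext "'ap ltl"
  | Eventually "'ap ltl"
  | Globally "'ap ltl"
  | Once "'ap ltl"

fun sat :: "(nat \<Rightarrow> 'ap set) \<Rightarrow> nat \<Rightarrow> 'ap ltl \<Rightarrow> bool" where
  "sat w i (Prop p) = (p \<in> w i)"
| "sat w i (NProp p) = (p \<notin> w i)"
| "sat w i (And a b) = (sat w i a \<and> sat w i b)"
| "sat w i (Or a b) = (sat w i a \<or> sat w i b)"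
| "sat w i (Next a) = sat w (Suc i) a"
| "sat w i (WNext a) = sat w (Suc i) a"
| "sat w i (Eventually a) = (\<exists>j\<ge>i. sat w j a)"
| "sat w i (Globally a) = (\<forall>j\<ge>i. sat w j a)"
| "sat w i (Once a) = (\<exists>j\<le>i. sat w j a)"

definition lang_omega :: "'ap ltl \<Rightarrow> (nat \<Rightarrow> 'ap set) set" where
  "lang_omega \<phi> = {w. sat w 0 \<phi>}"

definition equiv_omega :: "'ap ltl \<Rightarrow> 'ap ltl \<Rightarrow> bool" where
  "equiv_omega \<phi> \<psi> \<longleftrightarrow> lang_omega \<phi> = lang_omega \<psi>"

datatype op = OpX | OpWX | OpF | OpG | OpO

fun in_frag :: "op set \<Rightarrow> 'ap ltl \<Rightarrow> bool" where
  "in_frag S (Prop p) = True"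
| "in_frag S (NProp p) = True"
| "in_frag S (And a b) = (in_frag S a \<and> in_frag S b)"
| "in_frag S (Or a b) = (in_frag S a \<and> in_frag S b)"
| "in_frag S (Next a) = (OpX \<in> S \<and> in_frag S a)"
| "in_frag S (WNext a) = (OpWX \<in> S \<and> in_frag S a)"
| "in_frag S (Eventually a) = (OpF \<in> S \<and> in_frag S a)"
| "in_frag S (Globally a) = (OpG \<in> S \<and> in_frag S a)"
| "in_frag S (Once a) = (OpO \<in> S \<and> in_frag S a)"

definition in_F_LTL_O :: "'ap ltl \<Rightarrow> bool" where
  "in_F_LTL_O \<phi> \<longleftrightarrow> (\<exists>\<alpha>. \<phi> = Eventually \<alpha> \<and> in_frag {OpO} \<alpha>)"

end

theory Submission
  imports Defs
begin

lemma past_shift: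
  "in_frag {OpO} a \<Longrightarrow> sat (\<lambda>n. w (n + j)) i a \<Longrightarrow> sat w (i + j) a"
proof (induction a arbitrary: i)
  case (Once a)
  then obtain k where "k \<le> i" "sat (\<lambda>n. w (n + j)) k a" by auto
  with Once show ?case by (auto intro!: exI[of _ "k + j"])
qed auto

lemma fut_shift:
  "in_frag {OpX, OpWX, OpF, OpG} a \<Longrightarrow> sat w (i + j) a = sat (\<lambda>n. w (n + j)) i a"
proof (induction a arbitrary: i)
  case (Eventually a)
  have "(\<exists>k\<ge>i + j. sat w k a) = (\<exists>k\<ge>i. sat w (k + j) a)"
  proof
    assume "\<exists>k\<ge>i + j. sat w k a"
    then obtain k where "k \<ge> i + j" "sat w k a" by blast
    then show "\<exists>k\<ge>i. sat w (k + j) a"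
      by (intro exI[of _ "k - j"]) (simp add: le_diff_conv2)
  next
    assume "\<exists>k\<ge>i. sat w (k + j) a"
    then obtain k where "k \<ge> i" "sat w (k + j) a" by blast
    then show "\<exists>k\<ge>i + j. sat w k a" by (intro exI[of _ "k + j"]) simp
  qed
  then show ?case using Eventually by simp
next
  case (Globally a)
  have "(\<forall>k\<ge>i + j. sat w k a) = (\<forall>k\<ge>i. sat w (k + j) a)"
  proof
    assume "\<forall>k\<ge>i + j. sat w k a"
    then show "\<forall>k\<ge>i. sat w (k + j) a" by simp
  next
    assume H: "\<forall>k\<ge>i. sat w (k + j) a"
    show "\<forall>k\<ge>i + j. sat w k a"
    proof (intro allI impI)
      fix k assume "k \<ge> i + j"
      then have "k - j \<ge> i" "k - j + j = k" by auto
      then show "sat w k a" using H by metis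
    qed
  qed
  then show ?case using Globally by simp
next
  case (Next a)
  then show ?case using Next.IH[of "Suc i"] by simp
next
  case (WNext a)
  then show ?case using WNext.IH[of "Suc i"] by simp
qed auto

theorem lemma18:
  fixes \<phi> \<psi> :: "'ap ltl"
  assumes "finite (UNIV :: 'ap set)"
    and "in_F_LTL_O \<phi>"
    and "in_frag {OpX, OpWX, OpF, OpG} \<psi>"
    and "equiv_omega \<phi> \<psi>"
  shows "equiv_omega \<psi> (Eventually \<psi>)"
proof -
  obtain \<alpha> where phi: "\<phi> = Eventually \<alpha>" and al: "in_frag {OpO} \<alpha>"
    using assms(2) unfolding in_F_LTL_O_def by blast
  have eq: "\<And>w. sat w 0 \<phi> = sat w 0 \<psi>"
    using assms(4) unfolding equiv_omega_def lang_omega_def by blast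
  have "sat w 0 \<psi>" if "sat w j \<psi>" for w j
  proof -
    have "sat (\<lambda>n. w (n + j)) 0 \<psi>" using fut_shift[OF assms(3), of w 0 j] that by simp
    then have "sat (\<lambda>n. w (n + j)) 0 \<phi>" using eq by blast
    then obtain i where "sat (\<lambda>n. w (n + j)) i \<alpha>" using phi by auto
    then have "sat w (i + j) \<alpha>" using past_shift[OF al] by blast
    then have "sat w 0 \<phi>" using phi by auto
    then show ?thesis using eq by blast
  qed
  then show ?thesis unfolding equiv_omega_def lang_omega_def by auto
qed

end
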